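(* Let $x\in\beta\mathbb{N}$ with $x\in\overline{L_i}$ for some $i\ge1$. Then $x$ is irreducible in $\beta\mathbb{N}$ or $x$ is a product of irreducible elements of $\beta\mathbb{N}$.
   Context: $\mathbb{N}=\{1,2,3,\dots\}$; $\beta\mathbb{N}$ is the set of ultrafilters on $\mathbb{N}$ (Stone–Čech compactification of discrete $\mathbb{N}$, naturals identified with principal ultrafilters), with multiplication: $A\in xy$ iff $\{n\in\mathbb{N}:A/n\in y\}\in x$, where $A/n=\{m:mn\in A\}$. For $A\subseteq\mathbb{N}$, $\overline{A}=\{x\in\beta\mathbb{N}: A\in x\}$. $P$ is the set of primes, $L_0=\{1\}$, $L_n=\{a_1\cdots a_n: a_1,\dots,a_n\in P\}$. An element $p\in\beta\mathbb{N}$ is irreducible in $\beta\mathbb{N}$ if it cannot be written as $p=xy$ with $x,y\in\beta\mathbb{N}\setminus\{1\}$. *)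

theory Defs
  imports "HOL-Computational_Algebra.Primes"
begin

text \<open>An element of beta N is an ultrafilter on N, represented as an ultrafilter
 on nat (a family of subsets of nat) that contains {n. n \<ge> 1}; equivalently
 an ultrafilter on N, the trace map A \<mapsto> A \<inter> N being a bijection.\<close>

definition Npos :: "nat set" where
  "Npos = {n. 1 \<le> n}"

definition is_ultrafilter :: "nat set set \<Rightarrow> bool" where
  "is_ultrafilter U \<longleftrightarrow>
     {} \<notin> U \<and> UNIV \<in> U \<and>
     (\<forall>A B. A \<in> U \<and> A \<subseteq> B \<longrightarrow> B \<in> U) \<and>
     (\<forall>A B. A \<in> U \<and> B \<in> U \<longrightarrow> A \<inter> B \<in> U) \<and>
     (\<forall>A. A \<in> U \<or> - A \<in> U)"

definition betaN :: "nat set set set" where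
  "betaN = {U. is_ultrafilter U \<and> Npos \<in> U}"

definition principal :: "nat \<Rightarrow> nat set set" where
  "principal n = {A. n \<in> A}"

definition sdiv :: "nat set \<Rightarrow> nat \<Rightarrow> nat set" where
  "sdiv A n = {m. m * n \<in> A}"

definition umult :: "nat set set \<Rightarrow> nat set set \<Rightarrow> nat set set" where
  "umult x y = {A. {n \<in> Npos. sdiv A n \<in> y} \<in> x}"

definition irreducible_bN :: "nat set set \<Rightarrow> bool" where
  "irreducible_bN p \<longleftrightarrow> p \<in> betaN \<and>
     \<not> (\<exists>x\<in>betaN. \<exists>y\<in>betaN. x \<noteq> principal 1 \<and> y \<noteq> principal 1 \<and> p = umult x y)"

fun uprod :: "nat set set list \<Rightarrow> nat set set" where
  "uprod [] = principal 1"
| "uprod (p # ps) = umult p (uprod ps)"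

definition Lset :: "nat \<Rightarrow> nat set" where
  "Lset k = {prod_list as | as. length as = k \<and> (\<forall>a\<in>set as. prime a)}"

end

theory Submission
  imports Defs
begin

definition Om :: "nat \<Rightarrow> nat" where "Om n = size (prime_factorization n)"

lemma Lset_char: "Lset k = {n. n > 0 \<and> Om n = k}"
proof (intro set_eqI iffI)
  fix n assume "n \<in> Lset k"
  then obtain as where as: "n = prod_list as" "length as = k" "\<forall>a\<in>set as. prime a"
    unfolding Lset_def by blast
  have pl: "prod_list as = prod_mset (mset as)" by (simp add: prod_mset_prod_list)
  have "prime_factorization (prod_mset (mset as)) = mset as"
    by (rule prime_factorization_prod_mset_primes) (use as in auto)
  moreover have "n > 0" using as by (metis bot_nat_0.not_eq_extremum prod_list_zero_iff not_prime_0)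
  ultimately show "n \<in> {n. n > 0 \<and> Om n = k}" using as pl by (simp add: Om_def)
next
  fix n assume "n \<in> {n. n > 0 \<and> Om n = k}"
  hence n: "n > 0" "size (prime_factorization n) = k" by (auto simp: Om_def)
  obtain as where as: "mset as = prime_factorization n" using ex_mset by blast
  have "prod_list as = prod_mset (prime_factorization n)" using as by (metis prod_mset_prod_list)
  also have "\<dots> = n" using n prod_mset_prime_factorization_weak[of n] by simp
  finally have "n = prod_list as" by simp
  moreover have "length as = k" using as n by (metis size_mset)
  moreover have "\<forall>a\<in>set as. prime a" using as
    by (metis in_prime_factors_imp_prime set_mset_mset)
  ultimately show "n \<in> Lset k" unfolding Lset_def by blast
qed

lemma Om_mult: "m > 0 \<Longrightarrow> n > 0 \<Longrightarrow> Om (m*n) = Om m + Om n"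
  by (simp add: Om_def prime_factorization_mult)

lemma sdiv_L: "n > 0 \<Longrightarrow> sdiv (Lset i) n = (if Om n \<le> i then Lset (i - Om n) else {})"
  by (auto simp: sdiv_def Lset_char Om_mult)

lemma L0: "Lset 0 = {1}"
  unfolding Lset_def by auto

lemma uf_union: "is_ultrafilter U \<Longrightarrow> A \<union> B \<in> U \<Longrightarrow> A \<in> U \<or> B \<in> U"
proof -
  assume U: "is_ultrafilter U" "A \<union> B \<in> U"
  show ?thesis
  proof (cases "A \<in> U")
    case False
    hence "- A \<in> U" using U unfolding is_ultrafilter_def by blast
    hence "- A \<inter> (A \<union> B) \<in> U" using U unfolding is_ultrafilter_def by blast
    moreover have "- A \<inter> (A \<union> B) \<subseteq> B" by blast
    ultimately show ?thesis using U unfolding is_ultrafilter_def by blast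
  qed simp
qed

lemma uf_Union:
  fixes i :: nat
  shows "is_ultrafilter U \<Longrightarrow> (\<Union>j\<in>{..i}. B j) \<in> U \<Longrightarrow> \<exists>j\<le>i. B j \<in> U"
proof (induction i)
  case 0 then show ?case by simp
next
  case (Suc i)
  have "(\<Union>j\<in>{..Suc i}. B j) = (\<Union>j\<in>{..i}. B j) \<union> B (Suc i)"
    by (simp add: atMost_Suc sup_commute)
  with Suc.prems uf_union have "(\<Union>j\<in>{..i}. B j) \<in> U \<or> B (Suc i) \<in> U" by metis
  then show ?case using Suc by (meson le_SucI order_refl)
qed

lemma split_L:
  assumes y: "y \<in> betaN" and z: "z \<in> betaN" and L: "Lset i \<in> umult y z"
  shows "\<exists>j\<le>i. Lset j \<in> y \<and> Lset (i - j) \<in> z"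
proof -
  have yu: "is_ultrafilter y" and zu: "is_ultrafilter z" using y z by (auto simp: betaN_def)
  define S where "S = {n \<in> Npos. sdiv (Lset i) n \<in> z}"
  have S: "S \<in> y" using L by (simp add: umult_def S_def)
  define B where "B j = (if Lset (i - j) \<in> z then Lset j else {})" for j
  have "S \<subseteq> (\<Union>j\<in>{..i}. B j)"
  proof
    fix n assume "n \<in> S"
    hence n: "n > 0" "sdiv (Lset i) n \<in> z" by (auto simp: S_def Npos_def)
    have "Om n \<le> i"
    proof (rule ccontr)
      assume "\<not> Om n \<le> i"
      hence "{} \<in> z" using n sdiv_L[of n i] by simp
      thus False using zu by (simp add: is_ultrafilter_def)
    qed
    hence "n \<in> B (Om n)" using n sdiv_L[of n i] by (simp add: B_def Lset_char)
    thus "n \<in> (\<Union>j\<in>{..i}. B j)" using \<open>Om n \<le> i\<close> by blast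
  qed
  hence "(\<Union>j\<in>{..i}. B j) \<in> y" using S yu unfolding is_ultrafilter_def by blast
  then obtain j where j: "j \<le> i" "B j \<in> y" using uf_Union[OF yu] by blast
  have "B j \<noteq> {}" using j yu by (auto simp: is_ultrafilter_def)
  hence "Lset (i - j) \<in> z" by (auto simp: B_def split: if_splits)
  moreover have "Lset j \<in> y" using j \<open>Lset (i - j) \<in> z\<close> by (simp add: B_def)
  ultimately show ?thesis using j by blast
qed

lemma principal_of_L0: "y \<in> betaN \<Longrightarrow> Lset 0 \<in> y \<Longrightarrow> y = principal 1"
proof -
  assume y: "y \<in> betaN" "Lset 0 \<in> y"
  hence u: "is_ultrafilter y" and one: "{1} \<in> y" by (auto simp: betaN_def L0)
  show ?thesis
  proof (intro set_eqI iffI)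
    fix A assume "A \<in> y"
    hence "A \<inter> {1} \<in> y" using u one unfolding is_ultrafilter_def by blast
    hence "A \<inter> {1} \<noteq> {}" using u unfolding is_ultrafilter_def by metis
    thus "A \<in> principal 1" by (auto simp: principal_def)
  next
    fix A assume "A \<in> principal 1"
    hence "{1} \<subseteq> A" by (auto simp: principal_def)
    thus "A \<in> y" using u one unfolding is_ultrafilter_def by blast
  qed
qed

lemma umult_assoc: "umult (umult x y) z = umult x (umult y z)"
proof -
  have eq: "{k. k \<in> Npos \<and> sdiv A (k * m) \<in> z} = {k \<in> Npos. sdiv (sdiv A m) k \<in> z}"
    if "m \<in> Npos" for A m
  proof -
    have "sdiv (sdiv A m) k = sdiv A (k * m)" for k by (simp add: sdiv_def mult.assoc)
    thus ?thesis by auto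
  qed
  have eq2: "sdiv {n \<in> Npos. sdiv A n \<in> z} m = {k. k \<in> Npos \<and> sdiv A (k * m) \<in> z}"
    if "m \<in> Npos" for A m
    using that by (auto simp: Npos_def sdiv_def)
  have "{m \<in> Npos. sdiv {n \<in> Npos. sdiv A n \<in> z} m \<in> y} = {m \<in> Npos. {k \<in> Npos. sdiv (sdiv A m) k \<in> z} \<in> y}" for A
    using eq eq2 by auto
  thus ?thesis by (simp add: umult_def)
qed

lemma umult_left1: "umult (principal 1) y = y"
  by (simp add: umult_def principal_def Npos_def sdiv_def)

lemma umult_right1: "x \<in> betaN \<Longrightarrow> umult x (principal 1) = x"
proof -
  assume x: "x \<in> betaN"
  hence u: "is_ultrafilter x" and N: "Npos \<in> x" by (auto simp: betaN_def)
  have "{n \<in> Npos. sdiv A n \<in> principal 1} = A \<inter> Npos" for A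
    by (auto simp: principal_def sdiv_def)
  hence "umult x (principal 1) = {A. A \<inter> Npos \<in> x}" by (simp add: umult_def)
  also have "\<dots> = x"
  proof (intro set_eqI iffI)
    fix A assume "A \<in> {A. A \<inter> Npos \<in> x}"
    thus "A \<in> x" using u unfolding is_ultrafilter_def by blast
  next
    fix A assume "A \<in> x" thus "A \<in> {A. A \<inter> Npos \<in> x}" using u N unfolding is_ultrafilter_def by blast
  qed
  finally show ?thesis .
qed

lemma uprod_append: "uprod (ps @ qs) = umult (uprod ps) (uprod qs)"
proof (induction ps)
  case Nil
  show ?case by (simp only: uprod.simps append_Nil umult_left1)
next
  case (Cons p ps)
  thus ?case by (simp add: umult_assoc)
qed

lemma as_prod:
  "irreducible_bN x \<or> (\<exists>ps. ps \<noteq> [] \<and> (\<forall>p\<in>set ps. irreducible_bN p) \<and> x = uprod ps)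
   \<Longrightarrow> \<exists>ps. ps \<noteq> [] \<and> (\<forall>p\<in>set ps. irreducible_bN p) \<and> x = uprod ps"
proof (elim disjE)
  assume "irreducible_bN x"
  hence "x \<in> betaN" by (simp add: irreducible_bN_def)
  hence "x = uprod [x]" by (simp only: uprod.simps umult_right1)
  thus ?thesis using \<open>irreducible_bN x\<close> by (intro exI[of _ "[x]"]) auto
qed

theorem theorem2p10:
  fixes x :: "nat set set" and i :: nat
  assumes "x \<in> betaN" and "i \<ge> 1" and "Lset i \<in> x"
  shows "irreducible_bN x \<or>
         (\<exists>ps. ps \<noteq> [] \<and> (\<forall>p\<in>set ps. irreducible_bN p) \<and> x = uprod ps)"
  using assms
proof (induction i arbitrary: x rule: less_induct)
  case (less i)
  show ?case
  proof (cases "irreducible_bN x")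
    case False
    then obtain y z where yz: "y \<in> betaN" "z \<in> betaN" "y \<noteq> principal 1" "z \<noteq> principal 1"
      "x = umult y z" using less.prems by (auto simp: irreducible_bN_def)
    then obtain j where j: "j \<le> i" "Lset j \<in> y" "Lset (i - j) \<in> z"
      using split_L less.prems by blast
    have j0: "j \<noteq> 0" using j yz principal_of_L0 by auto
    have ij0: "i - j \<noteq> 0" using j yz principal_of_L0 by fastforce
    obtain ps where ps: "ps \<noteq> []" "\<forall>p\<in>set ps. irreducible_bN p" "y = uprod ps"
      using as_prod less.IH[of j y] j j0 ij0 yz by auto
    obtain qs where qs: "qs \<noteq> []" "\<forall>p\<in>set qs. irreducible_bN p" "z = uprod qs"
      using as_prod less.IH[of "i - j" z] j j0 ij0 yz by auto
    have "x = uprod (ps @ qs)" using ps qs yz by (simp add: uprod_append)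
    thus ?thesis using ps qs by (intro disjI2 exI[of _ "ps @ qs"]) auto
  qed simp
qed

end
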